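(* Let $n\ge3$ and let $u=x_0+h_1x_1+\cdots+h_{n-1}x_{n-1}$ be a polar $n$-complex number with $v_+>0$, with $v_->0$ if $n$ is even, and with $\rho_k>0$ for $k=1,\dots,\lfloor(n-1)/2\rfloor$. Let $\rho=(v_+v_-\rho_1^2\cdots\rho_{n/2-1}^2)^{1/n}$ for even $n$ and $\rho=(v_+\rho_1^2\cdots\rho_{(n-1)/2}^2)^{1/n}$ for odd $n$. Then for even $n$ $$u=\rho\exp\Big\{\sum_{p=1}^{n-1}h_p\Big[\frac1n\ln\frac{\sqrt2}{\tan\theta_+}+\frac{(-1)^p}{n}\ln\frac{\sqrt2}{\tan\theta_-}-\frac2n\sum_{k=2}^{n/2-1}\cos\Big(\frac{2\pi kp}{n}\Big)\ln\tan\psi_{k-1}\Big]+\sum_{k=1}^{n/2-1}\tilde e_k\phi_k\Big\},$$ and for odd $n$ $$u=\rho\exp\Big\{\sum_{p=1}^{n-1}h_p\Big[\frac1n\ln\frac{\sqrt2}{\tan\theta_+}-\frac2n\sum_{k=2}^{(n-1)/2}\cos\Big(\frac{2\pi kp}{n}\Big)\ln\tan\psi_{k-1}\Big]+\sum_{k=1}^{(n-1)/2}\tilde e_k\phi_k\Big\}.$$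
   Context: Polar $n$-complex numbers: $u=x_0+h_1x_1+\cdots+h_{n-1}x_{n-1}$, $x_j\in\mathbb{R}$, $h_0=1$, componentwise addition, bilinear multiplication $h_jh_k=h_{(j+k)\bmod n}$; $\exp w=\sum_{j\ge0}w^j/j!$. Canonical variables: $v_+=\sum_px_p$; for even $n$, $v_-=\sum_p(-1)^px_p$; for $k=1,\dots,\lfloor(n-1)/2\rfloor$, $v_k=\sum_px_p\cos(2\pi kp/n)$, $\tilde v_k=\sum_px_p\sin(2\pi kp/n)$, $\rho_k=\sqrt{v_k^2+\tilde v_k^2}$, $\phi_k\in[0,2\pi)$ with $\cos\phi_k=v_k/\rho_k$, $\sin\phi_k=\tilde v_k/\rho_k$. Angles: $\tan\theta_+=\sqrt2\rho_1/v_+$, $\tan\theta_-=\sqrt2\rho_1/v_-$ (even $n$), $\tan\psi_{k-1}=\rho_1/\rho_k$ for $k=2,\dots,\lfloor(n-1)/2\rfloor$. $\tilde e_k=\frac2n\sum_{p=0}^{n-1}\sin(2\pi kp/n)h_p$. *)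

theory Defs
  imports "HOL-Analysis.Analysis"
begin

text \<open>Polar n-complex numbers are represented by their component functions
  x :: nat \<Rightarrow> real, where only the components x 0, ..., x (n-1) are relevant
  (u = x 0 + h_1 x 1 + ... + h_(n-1) x (n-1)).\<close>

definition pc_mult :: "nat \<Rightarrow> (nat \<Rightarrow> real) \<Rightarrow> (nat \<Rightarrow> real) \<Rightarrow> (nat \<Rightarrow> real)" where
  "pc_mult n u w = (\<lambda>r. if r < n then
      (\<Sum>j<n. \<Sum>k<n. if (j + k) mod n = r then u j * w k else 0) else 0)"

definition pc_one :: "nat \<Rightarrow> real" where
  "pc_one = (\<lambda>r. if r = 0 then 1 else 0)"

primrec pc_pow :: "nat \<Rightarrow> (nat \<Rightarrow> real) \<Rightarrow> nat \<Rightarrow> (nat \<Rightarrow> real)" where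
  "pc_pow n w 0 = pc_one"
| "pc_pow n w (Suc j) = pc_mult n w (pc_pow n w j)"

definition pc_exp :: "nat \<Rightarrow> (nat \<Rightarrow> real) \<Rightarrow> (nat \<Rightarrow> real)" where
  "pc_exp n w = (\<lambda>r. \<Sum>j. pc_pow n w j r / fact j)"

definition v_plus :: "nat \<Rightarrow> (nat \<Rightarrow> real) \<Rightarrow> real" where
  "v_plus n x = (\<Sum>p<n. x p)"

definition v_minus :: "nat \<Rightarrow> (nat \<Rightarrow> real) \<Rightarrow> real" where
  "v_minus n x = (\<Sum>p<n. (-1) ^ p * x p)"

definition v_k :: "nat \<Rightarrow> (nat \<Rightarrow> real) \<Rightarrow> nat \<Rightarrow> real" where
  "v_k n x k = (\<Sum>p<n. x p * cos (2 * pi * real k * real p / real n))"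

definition vt_k :: "nat \<Rightarrow> (nat \<Rightarrow> real) \<Rightarrow> nat \<Rightarrow> real" where
  "vt_k n x k = (\<Sum>p<n. x p * sin (2 * pi * real k * real p / real n))"

definition rho_k :: "nat \<Rightarrow> (nat \<Rightarrow> real) \<Rightarrow> nat \<Rightarrow> real" where
  "rho_k n x k = sqrt ((v_k n x k)\<^sup>2 + (vt_k n x k)\<^sup>2)"

definition phi_k :: "nat \<Rightarrow> (nat \<Rightarrow> real) \<Rightarrow> nat \<Rightarrow> real" where
  "phi_k n x k = (THE \<phi>. 0 \<le> \<phi> \<and> \<phi> < 2 * pi \<and>
      cos \<phi> = v_k n x k / rho_k n x k \<and> sin \<phi> = vt_k n x k / rho_k n x k)"

definition theta_plus :: "nat \<Rightarrow> (nat \<Rightarrow> real) \<Rightarrow> real" where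
  "theta_plus n x = arctan (sqrt 2 * rho_k n x 1 / v_plus n x)"

definition theta_minus :: "nat \<Rightarrow> (nat \<Rightarrow> real) \<Rightarrow> real" where
  "theta_minus n x = arctan (sqrt 2 * rho_k n x 1 / v_minus n x)"

text \<open>psi n x (k - 1) = psi_{k-1}, tan psi_{k-1} = rho_1 / rho_k.\<close>
definition psi :: "nat \<Rightarrow> (nat \<Rightarrow> real) \<Rightarrow> nat \<Rightarrow> real" where
  "psi n x j = arctan (rho_k n x 1 / rho_k n x (j + 1))"

definition e_tilde :: "nat \<Rightarrow> nat \<Rightarrow> (nat \<Rightarrow> real)" where
  "e_tilde n k = (\<lambda>p. if p < n then 2 / real n * sin (2 * pi * real k * real p / real n) else 0)"

end

theory Submission
  imports Defs
begin

definition om :: "nat \<Rightarrow> complex" where "om n = cis (2 * pi / real n)"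

lemma om_pow: "om n ^ j = cis (2 * pi * real j / real n)"
  by (simp add: om_def Complex.DeMoivre mult_ac)

lemma om_pow_n: "n > 0 \<Longrightarrow> om n ^ n = 1"
  by (simp add: om_pow)

lemma om_pow_mod: "n > 0 \<Longrightarrow> om n ^ j = om n ^ (j mod n)"
proof -
  assume n: "n > 0"
  have "om n ^ j = om n ^ (n * (j div n) + j mod n)" by simp
  also have "\<dots> = (om n ^ n) ^ (j div n) * om n ^ (j mod n)" by (simp only: power_add power_mult)
  finally show ?thesis using om_pow_n[OF n] by simp
qed

lemma om_pow_eq1: "n > 0 \<Longrightarrow> om n ^ j = 1 \<longleftrightarrow> n dvd j"
proof
  assume n: "n > 0" and h: "om n ^ j = 1"
  have inj: "inj_on (\<lambda>k. cis (2 * pi * real k / real n)) {..<n}"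
    using bij_betw_imp_inj_on[OF Complex.bij_betw_roots_unity[OF n]] .
  have "om n ^ (j mod n) = om n ^ 0" using h om_pow_mod[OF n, of j] by simp
  hence "cis (2 * pi * real (j mod n) / real n) = cis (2 * pi * real 0 / real n)"
    by (simp only: om_pow)
  hence "j mod n = 0" using inj_onD[OF inj] n by (metis lessThan_iff mod_less_divisor)
  thus "n dvd j" by auto
next
  assume n: "n > 0" and "n dvd j"
  then obtain q where "j = n * q" by auto
  thus "om n ^ j = 1" using om_pow_n[OF n] by (simp add: power_mult)
qed

lemma om_sum: "n > 0 \<Longrightarrow> (\<Sum>p<n. om n ^ (j * p)) = (if n dvd j then of_nat n else 0)"
proof (cases "n dvd j")
  case True
  assume n: "n > 0"
  have "om n ^ (j * p) = 1" for p using True om_pow_eq1[OF n] by auto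
  then show ?thesis using True by simp
next
  case False
  assume n: "n > 0"
  have ne: "om n ^ j \<noteq> 1" using False om_pow_eq1[OF n] by auto
  have "(\<Sum>p<n. om n ^ (j * p)) = (\<Sum>p<n. (om n ^ j) ^ p)" by (simp add: power_mult)
  also have "\<dots> = ((om n ^ j) ^ n - 1) / (om n ^ j - 1)" using geometric_sum[OF ne] .
  also have "(om n ^ j) ^ n = 1" using om_pow_n[OF n] by (metis power_mult power_mult_distrib power_one mult.commute)
  finally show ?thesis using False by simp
qed

lemma if0_mult: "(if c then a else 0) * (z::'a::mult_zero) = (if c then a * z else 0)" by simp
lemma of_real_if0: "complex_of_real (if c then a else 0) = (if c then complex_of_real a else 0)" by simp

definition dft :: "nat \<Rightarrow> (nat \<Rightarrow> real) \<Rightarrow> nat \<Rightarrow> complex" where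
  "dft n u k = (\<Sum>p<n. complex_of_real (u p) * om n ^ (k * p))"

lemma dft_mult: assumes n: "n > 0" shows "dft n (pc_mult n u v) k = dft n u k * dft n v k"
proof -
  have "dft n (pc_mult n u v) k = (\<Sum>r<n. \<Sum>j<n. \<Sum>l<n. (if (j + l) mod n = r then complex_of_real (u j * v l) * om n ^ (k * r) else 0))"
    unfolding dft_def pc_mult_def by (simp add: sum_distrib_right if0_mult of_real_if0)
  also have "\<dots> = (\<Sum>j<n. \<Sum>l<n. \<Sum>r<n. (if (j + l) mod n = r then complex_of_real (u j * v l) * om n ^ (k * r) else 0))"
    by (subst sum.swap, rule sum.cong[OF refl], rule sum.swap)
  also have "\<dots> = (\<Sum>j<n. \<Sum>l<n. complex_of_real (u j * v l) * om n ^ (k * ((j + l) mod n)))"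
    using n by (simp add: sum.delta)
  also have "\<dots> = (\<Sum>j<n. \<Sum>l<n. (complex_of_real (u j) * om n ^ (k * j)) * (complex_of_real (v l) * om n ^ (k * l)))"
  proof (intro sum.cong refl)
    fix j l
    have "om n ^ (k * ((j + l) mod n)) = om n ^ ((k * (j + l)) mod n)"
      using om_pow_mod[OF n, of "k * ((j + l) mod n)"] om_pow_mod[OF n, of "k * (j + l)"]
      by (simp add: mod_mult_right_eq)
    also have "\<dots> = om n ^ (k * j) * om n ^ (k * l)"
      using om_pow_mod[OF n, of "k * (j + l)"] by (simp add: power_add algebra_simps)
    finally show "complex_of_real (u j * v l) * om n ^ (k * ((j + l) mod n)) = (complex_of_real (u j) * om n ^ (k * j)) * (complex_of_real (v l) * om n ^ (k * l))"
      by simp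
  qed
  also have "\<dots> = dft n u k * dft n v k"
    unfolding dft_def by (simp add: sum_product)
  finally show ?thesis .
qed

lemma dft_one: "n > 0 \<Longrightarrow> dft n pc_one k = 1"
  unfolding dft_def pc_one_def by (simp add: if0_mult of_real_if0 sum.delta)

lemma dft_pow: "n > 0 \<Longrightarrow> dft n (pc_pow n w j) k = dft n w k ^ j"
  by (induction j) (simp_all add: dft_one dft_mult)

lemma dft_inv: assumes n: "n > 0" and p: "p < n"
  shows "complex_of_real (u p) = (\<Sum>k<n. dft n u k * om n ^ (k * (n - p))) / of_nat n"
proof -
  have "(\<Sum>k<n. dft n u k * om n ^ (k * (n - p))) = (\<Sum>q<n. complex_of_real (u q) * (\<Sum>k<n. om n ^ ((q + (n - p)) * k)))"
  proof -
    have "(\<Sum>k<n. dft n u k * om n ^ (k * (n - p))) = (\<Sum>k<n. \<Sum>q<n. complex_of_real (u q) * om n ^ ((q + (n - p)) * k))"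
      unfolding dft_def sum_distrib_right by (simp add: power_add algebra_simps)
    also have "\<dots> = (\<Sum>q<n. \<Sum>k<n. complex_of_real (u q) * om n ^ ((q + (n - p)) * k))"
      by (rule sum.swap)
    finally show ?thesis by (simp add: sum_distrib_left)
  qed
  also have "\<dots> = (\<Sum>q<n. if q = p then complex_of_real (u q) * of_nat n else 0)"
  proof (intro sum.cong refl)
    fix q assume q: "q \<in> {..<n}"
    have "n dvd (q + (n - p)) \<longleftrightarrow> q = p"
    proof
      assume d: "n dvd (q + (n - p))"
      have "q + (n - p) < 2 * n" "0 < q + (n - p)" using q p by auto
      with d obtain c where "q + (n - p) = n * c" "c < 2" "c > 0" by (metis dvd_def mult.commute nat_0_less_mult_iff nat_mult_less_cancel_disj mult_2_right gr0I less_2_cases_iff mult_0_right)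
      then have "c = 1" "q + (n - p) = n * c" by simp_all
      then show "q = p" using q p by simp
    qed (use p in simp)
    then show "complex_of_real (u q) * (\<Sum>k<n. om n ^ ((q + (n - p)) * k)) = (if q = p then complex_of_real (u q) * of_nat n else 0)"
      using om_sum[OF n, of "q + (n - p)"] by auto
  qed
  also have "\<dots> = complex_of_real (u p) * of_nat n" using p by (simp add: sum.delta)
  finally show ?thesis using n by simp
qed

lemma pc_exp_dft: assumes n: "n > 0" and r: "r < n"
  shows "complex_of_real (pc_exp n E r) = (\<Sum>k<n. exp (dft n E k) * om n ^ (k * (n - r))) / of_nat n"
proof -
  let ?f = "\<lambda>j. pc_pow n E j r / fact j"
  have eq: "complex_of_real (?f j) = (\<Sum>k<n. (dft n E k ^ j /\<^sub>R fact j) * om n ^ (k * (n - r)) / of_nat n)" for j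
  proof -
    have "complex_of_real (?f j) = complex_of_real (pc_pow n E j r) / of_real (fact j)" by simp
    also have "\<dots> = (\<Sum>k<n. dft n E k ^ j * om n ^ (k * (n - r))) / of_nat n / of_real (fact j)"
      by (subst dft_inv[OF n r]) (simp add: dft_pow[OF n])
    also have "\<dots> = (\<Sum>k<n. (dft n E k ^ j /\<^sub>R fact j) * om n ^ (k * (n - r)) / of_nat n)"
      by (simp add: sum_divide_distrib scaleR_conv_of_real field_simps)
    finally show ?thesis .
  qed
  have "(\<lambda>j. \<Sum>k<n. (dft n E k ^ j /\<^sub>R fact j) * om n ^ (k * (n - r)) / of_nat n) sums
        (\<Sum>k<n. exp (dft n E k) * om n ^ (k * (n - r)) / of_nat n)"
    by (intro sums_sum sums_divide sums_mult2 exp_converges)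
  hence s: "(\<lambda>j. complex_of_real (?f j)) sums (\<Sum>k<n. exp (dft n E k) * om n ^ (k * (n - r)) / of_nat n)"
    by (simp only: eq)
  hence sm: "summable ?f" using sums_summable summable_complex_of_real by blast
  have "complex_of_real (pc_exp n E r) = complex_of_real (suminf ?f)" unfolding pc_exp_def by simp
  also have "\<dots> = (\<Sum>j. complex_of_real (?f j))" by (rule suminf_of_real[OF sm])
  also have "\<dots> = (\<Sum>k<n. exp (dft n E k) * om n ^ (k * (n - r)) / of_nat n)" using sums_unique[OF s] by simp
  finally show ?thesis by (simp add: sum_divide_distrib)
qed

lemma core: assumes n: "n > 0" and r: "r < n"
  and h: "\<And>k. k < n \<Longrightarrow> dft n x k = complex_of_real c * exp (dft n E k)"
  shows "x r = c * pc_exp n E r"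
proof -
  have "complex_of_real (x r) = (\<Sum>k<n. dft n x k * om n ^ (k * (n - r))) / of_nat n" by (rule dft_inv[OF n r])
  also have "\<dots> = complex_of_real c * ((\<Sum>k<n. exp (dft n E k) * om n ^ (k * (n - r))) / of_nat n)"
    by (simp add: h sum_distrib_left sum_divide_distrib mult.assoc)
  also have "\<dots> = complex_of_real (c * pc_exp n E r)" by (simp add: pc_exp_dft[OF n r])
  finally show ?thesis by (simp only: of_real_eq_iff)
qed

lemma dft_add: "dft n (\<lambda>p. f p + g p) k = dft n f k + dft n g k"
  unfolding dft_def by (simp add: sum.distrib algebra_simps)
lemma dft_diff: "dft n (\<lambda>p. f p - g p) k = dft n f k - dft n g k"
  unfolding dft_def by (simp add: sum_subtractf algebra_simps)
lemma dft_cmult: "dft n (\<lambda>p. c * f p) k = of_real c * dft n f k"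
  unfolding dft_def of_real_mult mult.assoc by (rule sum_distrib_left[symmetric])
lemma dft_multc: "dft n (\<lambda>p. f p * c) k = dft n f k * of_real c"
  unfolding dft_def of_real_mult sum_distrib_right by (intro sum.cong refl) (simp add: mult_ac)
lemma dft_sum: "dft n (\<lambda>p. \<Sum>j\<in>J. f j p) k = (\<Sum>j\<in>J. dft n (f j) k)"
  unfolding dft_def by (simp add: sum_distrib_right) (rule sum.swap)
lemma dft_cong: "(\<And>p. p < n \<Longrightarrow> f p = g p) \<Longrightarrow> dft n f k = dft n g k"
  unfolding dft_def by (intro sum.cong refl) auto

lemma dvd_window: "(n::nat) > 0 \<Longrightarrow> 0 < a \<Longrightarrow> a < 2 * n \<Longrightarrow> n dvd a \<longleftrightarrow> a = n"
proof
  assume n: "n > 0" and a: "0 < a" "a < 2 * n" and d: "n dvd a"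
  then obtain c where c: "a = n * c" by auto
  with a have "c > 0" by (cases c) auto
  moreover from c a have "c < 2" by (metis mult.commute nat_mult_less_cancel_disj)
  ultimately have "c = 1" by simp
  with c show "a = n" by simp
qed simp

lemma dft_const: "n > 0 \<Longrightarrow> k < n \<Longrightarrow> dft n (\<lambda>p. c) k = (if k = 0 then of_real c * of_nat n else 0)"
proof -
  assume n: "n > 0" and k: "k < n"
  have "dft n (\<lambda>p. c) k = of_real c * (\<Sum>p<n. om n ^ (k * p))" unfolding dft_def by (simp add: sum_distrib_left)
  also have "\<dots> = of_real c * (if n dvd k then of_nat n else 0)" by (simp add: om_sum[OF n])
  also have "n dvd k \<longleftrightarrow> k = 0" using k by (auto dest: dvd_imp_le)
  finally show ?thesis by simp
qed

lemma om_cnj: assumes j: "j \<le> n" and n: "n > 0" shows "om n ^ ((n - j) * p) = cnj (om n ^ (j * p))"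
proof -
  have eq: "2 * pi * real ((n - j) * p) / real n = 2 * pi * real p + (- (2 * pi * real (j * p) / real n))"
    using j n by (simp add: of_nat_diff field_simps)
  have "om n ^ ((n - j) * p) = cis (2 * pi * real p + (- (2 * pi * real (j * p) / real n)))"
    by (simp only: om_pow eq)
  also have "\<dots> = cis (2 * pi * real p) * cis (- (2 * pi * real (j * p) / real n))"
    by (simp only: cis_mult)
  also have "cis (2 * pi * real p) = 1" by (simp add: complex_eq_iff)
  finally show ?thesis by (simp add: om_pow cis_cnj)
qed

lemma cos_om: assumes j: "j \<le> n" and n: "n > 0"
  shows "complex_of_real (cos (2 * pi * real j * real p / real n)) = (om n ^ (j * p) + om n ^ ((n - j) * p)) / 2"
proof -
  have z: "om n ^ (j * p) = cis (2 * pi * real j * real p / real n)" by (simp add: om_pow mult.assoc)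
  show ?thesis unfolding om_cnj[OF j n] z by (simp add: cis_cnj complex_eq_iff)
qed

lemma sin_om: assumes j: "j \<le> n" and n: "n > 0"
  shows "complex_of_real (sin (2 * pi * real j * real p / real n)) = (om n ^ (j * p) - om n ^ ((n - j) * p)) / (2 * \<i>)"
proof -
  have z: "om n ^ (j * p) = cis (2 * pi * real j * real p / real n)" by (simp add: om_pow mult.assoc)
  have e: "cis t - cis (-t) = 2 * \<i> * complex_of_real (sin t)" for t by (simp add: complex_eq_iff)
  show ?thesis unfolding om_cnj[OF j n] z cis_cnj e by simp
qed

lemma dft_cos: assumes n: "n > 0" and j: "1 \<le> j" "j < n" and k: "k < n"
  shows "dft n (\<lambda>p. cos (2 * pi * real j * real p / real n)) k
     = of_nat n / 2 * ((if j = k then 1 else 0) + (if j = n - k then 1 else 0))"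
proof -
  have jle: "j \<le> n" using j by simp
  have "dft n (\<lambda>p. cos (2 * pi * real j * real p / real n)) k
      = (\<Sum>p<n. (om n ^ (j * p) + om n ^ ((n - j) * p)) / 2 * om n ^ (k * p))"
    by (simp only: dft_def cos_om[OF jle n])
  also have "\<dots> = (\<Sum>p<n. (om n ^ ((j + k) * p) + om n ^ ((n - j + k) * p)) / 2)"
    by (intro sum.cong refl) (simp add: add_mult_distrib power_add algebra_simps)
  also have "\<dots> = ((\<Sum>p<n. om n ^ ((j + k) * p)) + (\<Sum>p<n. om n ^ ((n - j + k) * p))) / 2"
    by (simp only: sum.distrib[symmetric] sum_divide_distrib)
  also have "\<dots> = of_nat n / 2 * ((if j = k then 1 else 0) + (if j = n - k then 1 else 0))"
  proof -
    have "n dvd (j + k) \<longleftrightarrow> j = n - k" using dvd_window[OF n, of "j + k"] j k by auto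
    moreover have "n dvd (n - j + k) \<longleftrightarrow> j = k" using dvd_window[OF n, of "n - j + k"] j k by auto
    ultimately show ?thesis by (simp add: om_sum[OF n])
  qed
  finally show ?thesis .
qed

lemma dft_sin: assumes n: "n > 0" and j: "1 \<le> j" "j < n" and k: "k < n"
  shows "dft n (\<lambda>p. sin (2 * pi * real j * real p / real n)) k
     = of_nat n / (2 * \<i>) * ((if j = n - k then 1 else 0) - (if j = k then 1 else 0))"
proof -
  have jle: "j \<le> n" using j by simp
  have "dft n (\<lambda>p. sin (2 * pi * real j * real p / real n)) k
      = (\<Sum>p<n. (om n ^ (j * p) - om n ^ ((n - j) * p)) / (2 * \<i>) * om n ^ (k * p))"
    by (simp only: dft_def sin_om[OF jle n])
  also have "\<dots> = (\<Sum>p<n. (om n ^ ((j + k) * p) - om n ^ ((n - j + k) * p)) / (2 * \<i>))"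
    by (intro sum.cong refl) (simp add: add_mult_distrib power_add algebra_simps)
  also have "\<dots> = ((\<Sum>p<n. om n ^ ((j + k) * p)) - (\<Sum>p<n. om n ^ ((n - j + k) * p))) / (2 * \<i>)"
    by (simp only: sum_subtractf[symmetric] sum_divide_distrib)
  also have "\<dots> = of_nat n / (2 * \<i>) * ((if j = n - k then 1 else 0) - (if j = k then 1 else 0))"
  proof -
    have "n dvd (j + k) \<longleftrightarrow> j = n - k" using dvd_window[OF n, of "j + k"] j k by auto
    moreover have "n dvd (n - j + k) \<longleftrightarrow> j = k" using dvd_window[OF n, of "n - j + k"] j k by auto
    ultimately show ?thesis by (simp add: om_sum[OF n])
  qed
  finally show ?thesis .
qed

lemma dft_alt: assumes n: "n > 0" and e: "even n" and k: "k < n"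
  shows "dft n (\<lambda>p. (-1) ^ p) k = (if k = n div 2 then of_nat n else 0)"
proof -
  have "om n ^ (n div 2) = -1"
  proof -
    have "om n ^ (n div 2) = cis pi" using e n by (simp add: om_pow real_of_nat_div)
    thus ?thesis by (simp add: complex_eq_iff)
  qed
  hence "complex_of_real ((-1) ^ p) = om n ^ (n div 2 * p)" for p by (simp add: power_mult)
  hence "dft n (\<lambda>p. (-1) ^ p) k = (\<Sum>p<n. om n ^ ((n div 2 + k) * p))"
    unfolding dft_def by (simp add: algebra_simps power_add)
  also have "\<dots> = (if k = n div 2 then of_nat n else 0)"
  proof -
    have "n dvd (n div 2 + k) \<longleftrightarrow> k = n div 2" using dvd_window[OF n, of "n div 2 + k"] k e n by auto
    thus ?thesis by (simp add: om_sum[OF n])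
  qed
  finally show ?thesis .
qed

lemma dftG: assumes n: "n > 0" and k: "k < n" and m: "2 * m < n"
  shows "dft n (\<lambda>p. A + B * (-1) ^ p
                 - 2 / real n * (\<Sum>j=2..m. cos (2 * pi * real j * real p / real n) * T j)
                 + (\<Sum>j=1..m. 2 / real n * sin (2 * pi * real j * real p / real n) * \<Phi> j)) k
   = (if k = 0 then of_real A * of_nat n else 0) + of_real B * dft n (\<lambda>p. (-1) ^ p) k
     - (if k \<in> {2..m} then of_real (T k) else 0) - (if n - k \<in> {2..m} then of_real (T (n - k)) else 0)
     + \<i> * (if k \<in> {1..m} then of_real (\<Phi> k) else 0) - \<i> * (if n - k \<in> {1..m} then of_real (\<Phi> (n - k)) else 0)"
proof -
  have c: "(\<Sum>j=2..m. dft n (\<lambda>p. cos (2 * pi * real j * real p / real n) * T j) k)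
     = of_nat n / 2 * ((if k \<in> {2..m} then of_real (T k) else 0) + (if n - k \<in> {2..m} then of_real (T (n - k)) else 0))"
  proof -
    have "(\<Sum>j=2..m. dft n (\<lambda>p. cos (2 * pi * real j * real p / real n) * T j) k)
       = (\<Sum>j=2..m. of_nat n / 2 * ((if j = k then of_real (T j) else 0) + (if j = n - k then of_real (T j) else 0)))"
    proof (intro sum.cong refl)
      fix j assume j: "j \<in> {2..m}"
      then have j1: "1 \<le> j" and j2: "j < n" using m by auto
      show "dft n (\<lambda>p. cos (2 * pi * real j * real p / real n) * T j) k
        = of_nat n / 2 * ((if j = k then of_real (T j) else 0) + (if j = n - k then of_real (T j) else 0))"
        unfolding dft_multc dft_cos[OF n j1 j2 k]
        by (cases "j = k"; cases "j = n - k") (simp_all add: algebra_simps)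
    qed
    also have "\<dots> = of_nat n / 2 * ((if k \<in> {2..m} then of_real (T k) else 0) + (if n - k \<in> {2..m} then of_real (T (n - k)) else 0))"
      by (simp only: sum_distrib_left[symmetric] sum.distrib sum.delta finite_atLeastAtMost)
    finally show ?thesis .
  qed
  have s: "(\<Sum>j=1..m. dft n (\<lambda>p. 2 / real n * sin (2 * pi * real j * real p / real n) * \<Phi> j) k)
     = - \<i> * ((if n - k \<in> {1..m} then of_real (\<Phi> (n - k)) else 0) - (if k \<in> {1..m} then of_real (\<Phi> k) else 0))"
  proof -
    have "(\<Sum>j=1..m. dft n (\<lambda>p. 2 / real n * sin (2 * pi * real j * real p / real n) * \<Phi> j) k)
       = (\<Sum>j=1..m. - \<i> * ((if j = n - k then of_real (\<Phi> j) else 0) - (if j = k then of_real (\<Phi> j) else 0)))"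
    proof (intro sum.cong refl)
      fix j assume j: "j \<in> {1..m}"
      then have j1: "1 \<le> j" and j2: "j < n" using m by auto
      show "dft n (\<lambda>p. 2 / real n * sin (2 * pi * real j * real p / real n) * \<Phi> j) k
        = - \<i> * ((if j = n - k then of_real (\<Phi> j) else 0) - (if j = k then of_real (\<Phi> j) else 0))"
        unfolding dft_multc dft_cmult dft_sin[OF n j1 j2 k]
        using n by (cases "j = k"; cases "j = n - k") (simp_all add: field_simps)
    qed
    also have "\<dots> = - \<i> * ((if n - k \<in> {1..m} then of_real (\<Phi> (n - k)) else 0) - (if k \<in> {1..m} then of_real (\<Phi> k) else 0))"
      by (simp only: sum_distrib_left[symmetric] sum_subtractf sum.delta finite_atLeastAtMost)
    finally show ?thesis .
  qed
  show ?thesis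
    using n by (simp only: dft_add dft_diff dft_cmult dft_sum c s dft_const[OF n k]) (simp add: field_simps)
qed

lemma om_half: "n > 0 \<Longrightarrow> even n \<Longrightarrow> om n ^ (n div 2) = -1"
proof -
  assume n: "n > 0" and e: "even n"
  have "om n ^ (n div 2) = cis pi" using e n by (simp add: om_pow real_of_nat_div)
  thus ?thesis by (simp add: complex_eq_iff)
qed

lemma dft_x: "dft n x k = Complex (v_k n x k) (vt_k n x k)"
  unfolding dft_def v_k_def vt_k_def by (simp add: complex_eq_iff om_pow mult.assoc)

lemma dft_x_cnj: "j \<le> n \<Longrightarrow> n > 0 \<Longrightarrow> dft n x (n - j) = cnj (dft n x j)"
  unfolding dft_def by (simp add: om_cnj)

lemma dft_x_half: assumes n: "n > 0" and e: "even n" shows "dft n x (n div 2) = of_real (v_minus n x)"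
  unfolding dft_def v_minus_def power_mult om_half[OF n e] by (simp add: mult.commute)

lemma dft_delta0: "dft n (\<lambda>p. if p = 0 then c else 0) k = (if 0 < n then of_real c else 0)"
  unfolding dft_def by (simp add: if0_mult of_real_if0 sum.delta)

lemma phi_prop: assumes r: "rho_k n x k > 0"
  shows "cos (phi_k n x k) = v_k n x k / rho_k n x k \<and> sin (phi_k n x k) = vt_k n x k / rho_k n x k"
proof -
  let ?a = "v_k n x k / rho_k n x k" and ?b = "vt_k n x k / rho_k n x k"
  have r2: "(rho_k n x k)\<^sup>2 = (v_k n x k)\<^sup>2 + (vt_k n x k)\<^sup>2"
    unfolding rho_k_def by simp
  have "?a\<^sup>2 + ?b\<^sup>2 = ((v_k n x k)\<^sup>2 + (vt_k n x k)\<^sup>2) / (rho_k n x k)\<^sup>2"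
    by (simp add: power_divide add_divide_distrib)
  also have "\<dots> = 1" using r by (simp only: r2[symmetric]) simp
  finally have "?a\<^sup>2 + ?b\<^sup>2 = 1" .
  then obtain t where t: "0 \<le> t" "t < 2 * pi" "?a = cos t" "?b = sin t" by (rule sincos_total_2pi)
  have uniq: "s = t" if s: "0 \<le> s \<and> s < 2 * pi \<and> cos s = ?a \<and> sin s = ?b" for s
  proof -
    from s t have "sin s = sin t \<and> cos s = cos t" by simp
    then obtain z :: int where z: "s = t + 2 * pi * z" by (auto simp: sin_cos_eq_iff)
    have z2: "2 * pi * real_of_int z = s - t" using z by simp
    have c: "0 < 2 * pi" by simp
    have "2 * pi * (-1) < 2 * pi * real_of_int z" using s t z2 by linarith
    hence l1: "-1 < real_of_int z" using mult_less_cancel_left_pos[OF c, of "-1" "real_of_int z"] by blast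
    have "2 * pi * real_of_int z < 2 * pi * 1" using s t z2 by linarith
    hence l2: "real_of_int z < 1" using mult_less_cancel_left_pos[OF c, of "real_of_int z" 1] by blast
    from l1 l2 have "z = 0" by simp
    thus ?thesis using z by simp
  qed
  have "\<exists>!s. 0 \<le> s \<and> s < 2 * pi \<and> cos s = ?a \<and> sin s = ?b"
  proof (rule ex1I[of _ t])
    show "0 \<le> t \<and> t < 2 * pi \<and> cos t = ?a \<and> sin t = ?b" using t by simp
  next
    fix s assume "0 \<le> s \<and> s < 2 * pi \<and> cos s = ?a \<and> sin s = ?b"
    thus "s = t" by (rule uniq)
  qed
  from theI'[OF this] show ?thesis unfolding phi_k_def by blast
qed

lemma dft_x_polar: "rho_k n x k > 0 \<Longrightarrow> dft n x k = of_real (rho_k n x k) * cis (phi_k n x k)"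
  using phi_prop[of n x k] by (simp add: dft_x complex_eq_iff)

lemma exp_split: "exp (complex_of_real a + \<i> * complex_of_real b) = complex_of_real (exp a) * cis b"
  by (simp add: exp_add cis_conv_exp exp_of_real mult.commute)

lemma fin_polar: assumes "R > 0" "r > 0"
  shows "complex_of_real R * exp (complex_of_real (ln r - ln R) + \<i> * complex_of_real \<phi>) = complex_of_real r * cis \<phi>"
proof -
  have e: "exp (ln r - ln R) = r / R" using assms by (simp add: exp_diff)
  show ?thesis unfolding exp_split e using assms by simp
qed

lemma fin_real: assumes "R > 0" "r > 0"
  shows "complex_of_real R * exp (complex_of_real (ln r - ln R)) = complex_of_real r"
proof -
  have e: "exp (ln r - ln R) = r / R" using assms by (simp add: exp_diff)
  show ?thesis unfolding exp_of_real e using assms by simp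
qed

lemma final_generic:
  fixes n m r :: nat and x E :: "nat \<Rightarrow> real" and A B R :: real
  assumes n3: "n \<ge> 3" and m: "m = (n - 1) div 2"
    and vp: "v_plus n x > 0" and vm: "even n \<Longrightarrow> v_minus n x > 0"
    and rk: "\<And>k. 1 \<le> k \<Longrightarrow> k \<le> m \<Longrightarrow> rho_k n x k > 0"
    and A: "A = 1 / real n * ln (sqrt 2 / tan (theta_plus n x))"
    and B: "B = (if even n then 1 / real n * ln (sqrt 2 / tan (theta_minus n x)) else 0)"
    and R: "R = (v_plus n x * (if even n then v_minus n x else 1) * (\<Prod>k=1..m. (rho_k n x k)\<^sup>2)) powr (1 / real n)"
    and E: "\<And>p. p < n \<Longrightarrow> E p = (if 1 \<le> p then A + B * (-1) ^ p
                 - 2 / real n * (\<Sum>j=2..m. cos (2 * pi * real j * real p / real n) * ln (tan (psi n x (j - 1))))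
                 else 0)
               + (\<Sum>j=1..m. 2 / real n * sin (2 * pi * real j * real p / real n) * phi_k n x j)"
    and r: "r < n"
  shows "x r = R * pc_exp n E r"
proof -
  have n0: "n > 0" using n3 by simp
  have m1: "1 \<le> m" using n3 m by simp
  have m2: "2 * m < n" using n3 m by simp
  have nm: "real n = 2 * real m + (if even n then 2 else 1)"
  proof (cases "even n")
    case True
    then have "n = 2 * m + 2" using m n3 by presburger
    then show ?thesis using True by simp
  next
    case False
    then have "n = 2 * m + 1" using m n3 by presburger
    then show ?thesis using False by simp
  qed
  define l where "l j = ln (rho_k n x j)" for j
  define T where "T j = ln (tan (psi n x (j - 1)))" for j
  define \<Phi> where "\<Phi> = phi_k n x"
  define G where "G = (\<lambda>p. A + B * (-1) ^ p
                 - 2 / real n * (\<Sum>j=2..m. cos (2 * pi * real j * real p / real n) * T j)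
                 + (\<Sum>j=1..m. 2 / real n * sin (2 * pi * real j * real p / real n) * \<Phi> j))"
  define G0 where "G0 = A + B - 2 / real n * (\<Sum>j=2..m. T j)"
  have G00: "G 0 = G0" by (simp add: G_def G0_def)
  have EG: "E p = G p - (if p = 0 then G0 else 0)" if p: "p < n" for p
  proof (cases "p = 0")
    case True then show ?thesis using E[OF p] G00 by simp
  next
    case False then show ?thesis using E[OF p] by (simp add: G_def T_def \<Phi>_def)
  qed
  have dftE: "dft n E k = dft n G k - of_real G0" for k
  proof -
    have "dft n E k = dft n (\<lambda>p. G p - (if p = 0 then G0 else 0)) k" by (rule dft_cong) (simp add: EG)
    also have "\<dots> = dft n G k - of_real G0" by (simp only: dft_diff dft_delta0) (simp add: n0)
    finally show ?thesis .
  qed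
  have rho1: "rho_k n x 1 > 0" using rk m1 by simp
  have hA: "A = (ln (v_plus n x) - l 1) / real n"
  proof -
    have "sqrt 2 / tan (theta_plus n x) = v_plus n x / rho_k n x 1"
      unfolding theta_plus_def tan_arctan using vp rho1 by (simp add: field_simps)
    thus ?thesis using vp rho1 by (simp add: A l_def ln_div)
  qed
  have hB: "B = (if even n then (ln (v_minus n x) - l 1) / real n else 0)"
  proof (cases "even n")
    case True
    have "sqrt 2 / tan (theta_minus n x) = v_minus n x / rho_k n x 1"
      unfolding theta_minus_def tan_arctan using vm[OF True] rho1 by (simp add: field_simps)
    thus ?thesis using vm[OF True] rho1 True by (simp add: B l_def ln_div)
  qed (simp add: B)
  have hT: "T j = l 1 - l j" if j: "j \<in> {2..m}" for j
  proof -
    have j1: "j - 1 + 1 = j" using j by simp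
    have "rho_k n x j > 0" using rk j by simp
    thus ?thesis unfolding T_def psi_def j1 tan_arctan l_def using rho1 by (simp add: ln_div)
  qed
  have sq: "0 < (rho_k n x k)\<^sup>2" if "k \<in> {1..m}" for k using rk[of k] that by simp
  have pp: "(\<Prod>k=1..m. (rho_k n x k)\<^sup>2) > 0" using sq by (rule prod_pos)
  have P: "v_plus n x * (if even n then v_minus n x else 1) * (\<Prod>k=1..m. (rho_k n x k)\<^sup>2) > 0"
    using vp vm pp by (auto intro!: mult_pos_pos)
  have Rpos: "R > 0" using P unfolding R by (simp only: powr_gt_zero)
  have lnR: "ln R = (ln (v_plus n x) + (if even n then ln (v_minus n x) else 0) + 2 * (\<Sum>j=1..m. l j)) / real n"
  proof -
    have "ln (\<Prod>k=1..m. (rho_k n x k)\<^sup>2) = (\<Sum>k=1..m. ln ((rho_k n x k)\<^sup>2))"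
      using sq by (intro ln_prod) auto
    also have "\<dots> = 2 * (\<Sum>j=1..m. l j)" using rk by (simp add: ln_realpow l_def sum_distrib_left)
    finally have lp: "ln (\<Prod>k=1..m. (rho_k n x k)\<^sup>2) = 2 * (\<Sum>j=1..m. l j)" .
    have "ln R = 1 / real n * ln (v_plus n x * (if even n then v_minus n x else 1) * (\<Prod>k=1..m. (rho_k n x k)\<^sup>2))"
      unfolding R by simp
    also have "ln (v_plus n x * (if even n then v_minus n x else 1) * (\<Prod>k=1..m. (rho_k n x k)\<^sup>2))
        = ln (v_plus n x) + (if even n then ln (v_minus n x) else 0) + ln (\<Prod>k=1..m. (rho_k n x k)\<^sup>2)"
    proof (cases "even n")
      case True
      have a: "v_plus n x * v_minus n x > 0" using vp vm True by simp
      show ?thesis unfolding if_P[OF True] by (simp only: ln_mult_pos[OF a pp] ln_mult_pos[OF vp vm[OF True]])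
    next
      case False
      show ?thesis unfolding if_not_P[OF False] by (simp only: mult_1_right add_0_right ln_mult_pos[OF vp pp])
    qed
    also note lp
    finally show ?thesis by simp
  qed
  have sumT: "(\<Sum>j=2..m. T j) = (real m - 1) * l 1 - (\<Sum>j=2..m. l j)"
  proof -
    have "(\<Sum>j=2..m. T j) = (\<Sum>j=2..m. l 1 - l j)" by (rule sum.cong) (simp_all add: hT)
    also have "\<dots> = real (m - 1) * l 1 - (\<Sum>j=2..m. l j)" by (simp add: sum_subtractf)
    finally show ?thesis using m1 by (simp add: of_nat_diff)
  qed
  have suml: "(\<Sum>j=1..m. l j) = l 1 + (\<Sum>j=2..m. l j)"
    using m1 by (simp add: sum.atLeast_Suc_atMost numeral_2_eq_2)
  have hG0: "G0 = ln R - l 1"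
  proof -
    let ?S = "\<Sum>j=2..m. l j"
    have e1: "real n * G0 = ln (v_plus n x) - l 1 + (if even n then ln (v_minus n x) - l 1 else 0) - 2 * ((real m - 1) * l 1 - ?S)"
      unfolding G0_def sumT hA hB using n0 by (cases "even n") (simp_all add: field_simps)
    have e2: "real n * (ln R - l 1) = ln (v_plus n x) + (if even n then ln (v_minus n x) else 0) + 2 * (l 1 + ?S) - real n * l 1"
      unfolding lnR suml using n0 by (simp add: field_simps)
    have "real n * G0 = real n * (ln R - l 1)" unfolding e1 e2 using nm
      by (cases "even n") (simp_all add: algebra_simps)
    thus ?thesis using n0 by simp
  qed
  have key: "dft n x k = of_real R * exp (dft n E k)" if k: "k < n" for k
  proof -
    have dG: "dft n G k = (if k = 0 then of_real A * of_nat n else 0) + of_real B * dft n (\<lambda>p. (-1) ^ p) k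
     - (if k \<in> {2..m} then of_real (T k) else 0) - (if n - k \<in> {2..m} then of_real (T (n - k)) else 0)
     + \<i> * (if k \<in> {1..m} then of_real (\<Phi> k) else 0) - \<i> * (if n - k \<in> {1..m} then of_real (\<Phi> (n - k)) else 0)"
      unfolding G_def by (rule dftG[OF n0 k m2])
    have half: "even n \<Longrightarrow> n div 2 = m + 1" using m n3 by presburger
    have alt: "of_real B * dft n (\<lambda>p. (-1) ^ p) k = (if even n \<and> k = n div 2 then of_real (ln (v_minus n x) - l 1) else 0)"
    proof (cases "even n")
      case True
      then show ?thesis using n0 unfolding dft_alt[OF n0 True k] hB by simp
    qed (simp add: hB)
    have Tl: "(if j \<in> {2..m} then T j else 0) + G0 = ln R - l j" if j: "j \<in> {1..m}" for j
    proof (cases "j = 1")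
      case True then show ?thesis using hG0 by simp
    next
      case False then have "j \<in> {2..m}" using j by auto
      then show ?thesis using hG0 hT by simp
    qed
    have nk: "n - k \<notin> {1..m}" if "k \<le> m" using that m2 by auto
    consider (z) "k = 0" | (lo) "1 \<le> k \<and> k \<le> m" | (h) "even n \<and> k = n div 2" | (hi) "m < k \<and> \<not> (even n \<and> k = n div 2)"
      by linarith
    then show ?thesis
    proof cases
      case z
      have c0: "\<not> (even n \<and> k = n div 2)" using z n3 by auto
      have alt0: "of_real B * dft n (\<lambda>p. (-1) ^ p) k = 0" by (simp only: alt if_not_P[OF c0])
      have "dft n E k = of_real (A * real n - G0)" using m2 n3
        unfolding dftE dG alt0 using z by simp
      also have "A * real n - G0 = ln (v_plus n x) - ln R" using n0 hA hG0 by simp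
      finally have "dft n E k = of_real (ln (v_plus n x) - ln R)" .
      moreover have "dft n x k = of_real (v_plus n x)" using z by (simp add: dft_x v_k_def vt_k_def v_plus_def complex_eq_iff)
      ultimately show ?thesis using fin_real[OF Rpos vp] by simp
    next
      case lo
      have kn: "\<not> (even n \<and> k = n div 2)" using lo half by auto
      have alt0: "of_real B * dft n (\<lambda>p. (-1) ^ p) k = 0" by (simp only: alt if_not_P[OF kn])
      have a: "k \<noteq> 0" "k \<in> {1..m}" "n - k \<notin> {1..m}" "n - k \<notin> {2..m}" using lo nk by auto
      have "dft n E k = - of_real ((if k \<in> {2..m} then T k else 0) + G0) + \<i> * of_real (\<Phi> k)"
        unfolding dftE dG alt0 if_not_P[OF a(1)] if_P[OF a(2)] if_not_P[OF a(3)] if_not_P[OF a(4)] by simp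
      also have "\<dots> = of_real (ln (rho_k n x k) - ln R) + \<i> * of_real (\<Phi> k)"
        using Tl[of k] lo by (simp add: l_def)
      finally have "dft n E k = of_real (ln (rho_k n x k) - ln R) + \<i> * of_real (\<Phi> k)" .
      moreover have "dft n x k = of_real (rho_k n x k) * cis (\<Phi> k)" using rk lo unfolding \<Phi>_def by (intro dft_x_polar) auto
      ultimately show ?thesis using fin_polar[OF Rpos, of "rho_k n x k"] rk lo by simp
    next
      case h
      have a: "k \<noteq> 0" "k \<notin> {1..m}" "n - k \<notin> {1..m}" "n - k \<notin> {2..m}" "k \<notin> {2..m}" using h half by auto
      have "dft n E k = of_real (ln (v_minus n x) - l 1 - G0)"
        unfolding dftE dG alt if_P[OF h] if_not_P[OF a(1)] if_not_P[OF a(2)] if_not_P[OF a(3)] if_not_P[OF a(4)] if_not_P[OF a(5)]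
        by simp
      also have "ln (v_minus n x) - l 1 - G0 = ln (v_minus n x) - ln R" using hG0 by simp
      finally have "dft n E k = of_real (ln (v_minus n x) - ln R)" .
      moreover have "dft n x k = of_real (v_minus n x)" using h dft_x_half[OF n0] by simp
      ultimately show ?thesis using fin_real[OF Rpos vm] h by simp
    next
      case hi
      define j where "j = n - k"
      have kj: "k = n - j" using j_def k by simp
      have "1 \<le> j \<and> j \<le> m" using hi k m j_def by presburger
      hence j: "j \<in> {1..m}" by simp
      have kn: "k \<notin> {1..m}" "k \<noteq> 0" using hi by auto
      have alt0: "of_real B * dft n (\<lambda>p. (-1) ^ p) k = 0" using hi by (simp only: alt if_not_P) simp
      have a: "k \<noteq> 0" "k \<notin> {1..m}" "k \<notin> {2..m}" using hi by auto
      have "dft n E k = - of_real ((if j \<in> {2..m} then T j else 0) + G0) - \<i> * of_real (\<Phi> j)"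
        unfolding dftE dG alt0 if_not_P[OF a(1)] if_not_P[OF a(2)] if_not_P[OF a(3)] j_def[symmetric] if_P[OF j]
        by simp
      also have "\<dots> = of_real (ln (rho_k n x j) - ln R) + \<i> * of_real (- \<Phi> j)"
        using Tl[OF j] by (simp add: l_def)
      finally have EE: "dft n E k = of_real (ln (rho_k n x j) - ln R) + \<i> * of_real (- \<Phi> j)" .
      have XX: "dft n x k = of_real (rho_k n x j) * cis (- \<Phi> j)"
      proof -
        have "dft n x k = cnj (dft n x j)" unfolding kj using j m2 by (intro dft_x_cnj) auto
        also have "dft n x j = of_real (rho_k n x j) * cis (\<Phi> j)" using rk j unfolding \<Phi>_def by (intro dft_x_polar) auto
        finally show ?thesis by (simp add: cis_cnj)
      qed
      have rpos: "rho_k n x j > 0" using rk j by simp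
      show ?thesis unfolding EE XX by (rule fin_polar[OF Rpos rpos, symmetric])
    qed
  qed
  show ?thesis by (rule core[OF n0 r key])
qed

theorem mainTheorem10:
  fixes n :: nat and x :: "nat \<Rightarrow> real"
  assumes n3: "n \<ge> 3"
    and vp: "v_plus n x > 0"
    and vm: "even n \<Longrightarrow> v_minus n x > 0"
    and rk: "\<And>k. 1 \<le> k \<Longrightarrow> k \<le> (n - 1) div 2 \<Longrightarrow> rho_k n x k > 0"
  shows
   "(even n \<longrightarrow>
      (let \<rho> = (v_plus n x * v_minus n x * (\<Prod>k=1..n div 2 - 1. (rho_k n x k)\<^sup>2)) powr (1 / real n);
           E = (\<lambda>p. (if 1 \<le> p \<and> p < n then
                   1 / real n * ln (sqrt 2 / tan (theta_plus n x))
                 + (-1) ^ p / real n * ln (sqrt 2 / tan (theta_minus n x))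
                 - 2 / real n * (\<Sum>k=2..n div 2 - 1.
                      cos (2 * pi * real k * real p / real n) * ln (tan (psi n x (k - 1))))
                 else 0)
               + (\<Sum>k=1..n div 2 - 1. e_tilde n k p * phi_k n x k))
       in \<forall>r<n. x r = \<rho> * pc_exp n E r))
  \<and> (odd n \<longrightarrow>
      (let \<rho> = (v_plus n x * (\<Prod>k=1..(n - 1) div 2. (rho_k n x k)\<^sup>2)) powr (1 / real n);
           E = (\<lambda>p. (if 1 \<le> p \<and> p < n then
                   1 / real n * ln (sqrt 2 / tan (theta_plus n x))
                 - 2 / real n * (\<Sum>k=2..(n - 1) div 2.
                      cos (2 * pi * real k * real p / real n) * ln (tan (psi n x (k - 1))))
                 else 0)
               + (\<Sum>k=1..(n - 1) div 2. e_tilde n k p * phi_k n x k))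
       in \<forall>r<n. x r = \<rho> * pc_exp n E r))"
proof -
  have md: "even n \<Longrightarrow> n div 2 - 1 = (n - 1) div 2" by presburger
  show ?thesis
  proof (intro conjI impI)
    assume e: "even n"
    have R: "(v_plus n x * v_minus n x * (\<Prod>k=1..(n - 1) div 2. (rho_k n x k)\<^sup>2)) powr (1 / real n) = (v_plus n x * (if even n then v_minus n x else 1) * (\<Prod>k=1..(n - 1) div 2. (rho_k n x k)\<^sup>2)) powr (1 / real n)" using e by simp
    have E: "(\<lambda>p. (if 1 \<le> p \<and> p < n then
                   1 / real n * ln (sqrt 2 / tan (theta_plus n x))
                 + (-1) ^ p / real n * ln (sqrt 2 / tan (theta_minus n x))
                 - 2 / real n * (\<Sum>k=2..(n - 1) div 2.
                      cos (2 * pi * real k * real p / real n) * ln (tan (psi n x (k - 1))))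
                 else 0)
               + (\<Sum>k=1..(n - 1) div 2. e_tilde n k p * phi_k n x k)) p = (if 1 \<le> p then 1 / real n * ln (sqrt 2 / tan (theta_plus n x)) + (if even n then 1 / real n * ln (sqrt 2 / tan (theta_minus n x)) else 0) * (-1) ^ p
                 - 2 / real n * (\<Sum>j=2..(n - 1) div 2. cos (2 * pi * real j * real p / real n) * ln (tan (psi n x (j - 1))))
                 else 0)
               + (\<Sum>j=1..(n - 1) div 2. 2 / real n * sin (2 * pi * real j * real p / real n) * phi_k n x j)" if "p < n" for p
      using e that by (simp add: e_tilde_def field_simps)
    have "\<forall>r<n. x r = (v_plus n x * v_minus n x * (\<Prod>k=1..(n - 1) div 2. (rho_k n x k)\<^sup>2)) powr (1 / real n) * pc_exp n (\<lambda>p. (if 1 \<le> p \<and> p < n then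
                   1 / real n * ln (sqrt 2 / tan (theta_plus n x))
                 + (-1) ^ p / real n * ln (sqrt 2 / tan (theta_minus n x))
                 - 2 / real n * (\<Sum>k=2..(n - 1) div 2.
                      cos (2 * pi * real k * real p / real n) * ln (tan (psi n x (k - 1))))
                 else 0)
               + (\<Sum>k=1..(n - 1) div 2. e_tilde n k p * phi_k n x k)) r"
      using final_generic[where B="if even n then 1 / real n * ln (sqrt 2 / tan (theta_minus n x)) else 0", OF n3 refl vp vm rk refl refl R E] by blast
    then show "let \<rho> = (v_plus n x * v_minus n x * (\<Prod>k=1..n div 2 - 1. (rho_k n x k)\<^sup>2)) powr (1 / real n);
           E = (\<lambda>p. (if 1 \<le> p \<and> p < n then
                   1 / real n * ln (sqrt 2 / tan (theta_plus n x))
                 + (-1) ^ p / real n * ln (sqrt 2 / tan (theta_minus n x))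
                 - 2 / real n * (\<Sum>k=2..n div 2 - 1.
                      cos (2 * pi * real k * real p / real n) * ln (tan (psi n x (k - 1))))
                 else 0)
               + (\<Sum>k=1..n div 2 - 1. e_tilde n k p * phi_k n x k))
       in \<forall>r<n. x r = \<rho> * pc_exp n E r"
      unfolding Let_def md[OF e] .
  next
    assume o: "odd n"
    have R: "(v_plus n x * (\<Prod>k=1..(n - 1) div 2. (rho_k n x k)\<^sup>2)) powr (1 / real n) = (v_plus n x * (if even n then v_minus n x else 1) * (\<Prod>k=1..(n - 1) div 2. (rho_k n x k)\<^sup>2)) powr (1 / real n)" using o by simp
    have E: "(\<lambda>p. (if 1 \<le> p \<and> p < n then
                   1 / real n * ln (sqrt 2 / tan (theta_plus n x))
                 - 2 / real n * (\<Sum>k=2..(n - 1) div 2.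
                      cos (2 * pi * real k * real p / real n) * ln (tan (psi n x (k - 1))))
                 else 0)
               + (\<Sum>k=1..(n - 1) div 2. e_tilde n k p * phi_k n x k)) p = (if 1 \<le> p then 1 / real n * ln (sqrt 2 / tan (theta_plus n x)) + (if even n then 1 / real n * ln (sqrt 2 / tan (theta_minus n x)) else 0) * (-1) ^ p
                 - 2 / real n * (\<Sum>j=2..(n - 1) div 2. cos (2 * pi * real j * real p / real n) * ln (tan (psi n x (j - 1))))
                 else 0)
               + (\<Sum>j=1..(n - 1) div 2. 2 / real n * sin (2 * pi * real j * real p / real n) * phi_k n x j)" if "p < n" for p
      using o that by (simp add: e_tilde_def field_simps)
    have "\<forall>r<n. x r = (v_plus n x * (\<Prod>k=1..(n - 1) div 2. (rho_k n x k)\<^sup>2)) powr (1 / real n) * pc_exp n (\<lambda>p. (if 1 \<le> p \<and> p < n then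
                   1 / real n * ln (sqrt 2 / tan (theta_plus n x))
                 - 2 / real n * (\<Sum>k=2..(n - 1) div 2.
                      cos (2 * pi * real k * real p / real n) * ln (tan (psi n x (k - 1))))
                 else 0)
               + (\<Sum>k=1..(n - 1) div 2. e_tilde n k p * phi_k n x k)) r"
      using final_generic[where B="if even n then 1 / real n * ln (sqrt 2 / tan (theta_minus n x)) else 0", OF n3 refl vp vm rk refl refl R E] by blast
    then show "let \<rho> = (v_plus n x * (\<Prod>k=1..(n - 1) div 2. (rho_k n x k)\<^sup>2)) powr (1 / real n);
           E = (\<lambda>p. (if 1 \<le> p \<and> p < n then
                   1 / real n * ln (sqrt 2 / tan (theta_plus n x))
                 - 2 / real n * (\<Sum>k=2..(n - 1) div 2.
                      cos (2 * pi * real k * real p / real n) * ln (tan (psi n x (k - 1))))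
                 else 0)
               + (\<Sum>k=1..(n - 1) div 2. e_tilde n k p * phi_k n x k))
       in \<forall>r<n. x r = \<rho> * pc_exp n E r"
      unfolding Let_def .
  qed
qed

end
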